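(* For every game $g\in\mathcal{S}_1\cup\mathcal{S}_2$ and every game $h$ obtained from $g$ by a single move of Right, the game returned by ASF applied to $h$ belongs to $\mathcal{S}_0$.
   Context: Linear clobber: Left owns black stones $\mathtt{x}$, Right owns white stones $\mathtt{o}$, on a path of cells each empty or holding a stone. A move: a player chooses one of their stones adjacent (consecutive on the path) to an opponent stone, removes the opponent stone and moves their own stone into that cell, emptying its original cell. Players alternate; whoever cannot move loses. A part is a maximal block of consecutive non-empty cells, written as a word over $\{\mathtt{o},\mathtt{x}\}$ (concatenation, exponents for repetition); a part and its reversal are identified; a game is the disjoint sum (multiset) of its parts, and $0$ denotes the game with no parts. For a part $p$, $-p$ swaps all colors. Notation: $\mathtt{a}(2n)=(\mathtt{ox})^n$; $\mathtt{o}(2t+1)=\mathtt{o}(\mathtt{xo})^t$; $\mathtt{oo}(2t)=\mathtt{oo}(\mathtt{xo})^{t-1}$; $\mathtt{oo}(2t+1)=\mathtt{o}(\mathtt{ox})^{t}$; $\mathtt{oo}(2t+1)\mathtt{oo}=\mathtt{oo}(\mathtt{xo})^{t-1}\mathtt{o}$. Algorithm ASF: repeatedly apply the first applicable rule in the order $\alpha,-\alpha,\beta,-\beta,\gamma,-\gamma,\delta,-\delta,\varepsilon,-\varepsilon,\zeta,-\zeta,\eta,-\eta$ until none applies; each rule replaces one part (up to reversal) by the listed parts: $\alpha$: each of $\mathtt{o},\mathtt{oo},\mathtt{ooo},\mathtt{ooxx},\mathtt{oxoxox}$ by nothing; $\beta$: if parts $p$ and $-p$ are both present, delete both; $\gamma$: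 each of $\mathtt{oxo},\mathtt{ooxox},\mathtt{ooxoxoo},\mathtt{xxoxoxx}$ by $\mathtt{ox}$; $\delta$: $\mathtt{oxoxoxoxo}$ by $\mathtt{ooxo}$; $\varepsilon$: each of $\mathtt{ooxoxx},\mathtt{oxoxoxoxoxox}$ by $\mathtt{oxox}+\mathtt{ox}$; $\zeta$: $\mathtt{ooxoo}$ by $\mathtt{oox}$; $\eta$: $\mathtt{ooxo}$ by $\mathtt{xxo}+\mathtt{ox}$. The rule $-\rho$ is $\rho$ with every part on both sides replaced by its negative. A game is in standard form if no rule applies to it. Sets of parts: $\mathcal{O}'=\{\mathtt{o}(2t+1): t\ge 2, t\ne 4\}$ ($\mathtt{o5},\mathtt{o7},\mathtt{o11},\dots$); $o\mathcal{O}'=\{\mathtt{oo}(2t): t\ge 5\}$; $o\mathcal{O}o'=\{\mathtt{oox}\}\cup\{\mathtt{oo}(2t+1)\mathtt{oo}: t\ge 4\}$; $\mathcal{I}=\{\mathtt{a2},\mathtt{a4},\mathtt{oo6}\}$; $\mathcal{A}'=\{\mathtt{a}(2n): n\ge 4, n\ne 6\}$; $o\mathcal{A}'=\{\mathtt{oo}(2t+1): t\ge 3\}$; $K=\mathcal{O}'\cup o\mathcal{O}'\cup o\mathcal{O}o'\cup\mathcal{I}\cup\{\mathtt{xxo}\}\cup\{\mathtt{oo8}\}\cup\mathcal{A}'\cup o\mathcal{A}'$. For a game $g$ in standard form with all parts in $K$, its count vector is $(a,b,c,d,e,f,y,z)$ where these are the numbers of parts of $g$ (with multiplicity) lying in $\mathcal{O}'$,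 $o\mathcal{O}'$, $o\mathcal{O}o'$, $\mathcal{I}$, $\{\mathtt{xxo}\}$, $\{\mathtt{oo8}\}$, $\mathcal{A}'$, $o\mathcal{A}'$ respectively. Let $Q=\{\mathtt{o5}+\mathtt{a2},\ \mathtt{o7}+\mathtt{a4},\ \mathtt{o15}+\mathtt{a4}+\mathtt{a2}\}$. Consider games $g$ in standard form with at least one part and all parts in $K$. Then: $g\in\mathcal{S}_0$ iff $(y,z)=(1,0)$ and $a\ge c$, or $(y,z)=(0,0)$ and $a\ge c$, or $(y,z)=(0,1)$ and $a\ge c+1$; $g\in\mathcal{S}_1$ iff $(y,z)=(0,0)$, $a\ge c+1$ and $g\notin Q$; $g\in\mathcal{S}_2$ iff $y=z=a=b=c=0$, $e\ge 1$, and either $d=0$ or $d+e\ge 3$. *)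

theory Defs
  imports Main "HOL-Library.Multiset"
begin

text \<open>B = black stone x (Left), W = white stone o (Right).\<close>
datatype stone = B | W

type_synonym part = "stone list"
type_synonym game = "part multiset"

text \<open>Word notation: wd ''oxo'' is the part o x o.\<close>
definition wd :: "string \<Rightarrow> part" where
  "wd s = map (\<lambda>c. if c = CHR ''x'' then B else W) s"

fun swap :: "stone \<Rightarrow> stone" where
  "swap B = W" | "swap W = B"

definition negp :: "part \<Rightarrow> part" where
  "negp p = map swap p"

definition same_part :: "part \<Rightarrow> part \<Rightarrow> bool" where
  "same_part p q \<longleftrightarrow> p = q \<or> p = rev q"

definition in_up :: "part \<Rightarrow> part set \<Rightarrow> bool" where
  "in_up p A \<longleftrightarrow> (\<exists>q\<in>A. same_part p q)"

definition right_move :: "game \<Rightarrow> game \<Rightarrow> bool" where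
  "right_move g h \<longleftrightarrow> (\<exists>p\<in>#g. \<exists>u v.
     (p = u @ [B, W] @ v \<and> h = g - {#p#} + filter_mset (\<lambda>q. q \<noteq> []) {#u @ [W], v#}) \<or>
     (p = u @ [W, B] @ v \<and> h = g - {#p#} + filter_mset (\<lambda>q. q \<noteq> []) {#u, W # v#}))"

datatype rule = Repl "(part \<times> part list) list" | Cancel

fun neg_rule :: "rule \<Rightarrow> rule" where
  "neg_rule (Repl rs) = Repl (map (\<lambda>(l, r). (negp l, map negp r)) rs)"
| "neg_rule Cancel = Cancel"

fun rule_res :: "rule \<Rightarrow> game \<Rightarrow> game \<Rightarrow> bool" where
  "rule_res (Repl rs) g g' \<longleftrightarrow> (\<exists>(l, r)\<in>set rs. \<exists>p\<in>#g. same_part p l \<and> g' = g - {#p#} + mset r)"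
| "rule_res Cancel g g' \<longleftrightarrow> (\<exists>p\<in>#g. \<exists>q\<in>#(g - {#p#}). same_part q (negp p) \<and> g' = g - {#p, q#})"

definition applicable :: "rule \<Rightarrow> game \<Rightarrow> bool" where
  "applicable \<rho> g \<longleftrightarrow> (\<exists>g'. rule_res \<rho> g g')"

definition rule_alpha :: rule where
  "rule_alpha = Repl [(wd ''o'', []), (wd ''oo'', []), (wd ''ooo'', []), (wd ''ooxx'', []), (wd ''oxoxox'', [])]"
definition rule_gamma :: rule where
  "rule_gamma = Repl [(wd ''oxo'', [wd ''ox'']), (wd ''ooxox'', [wd ''ox'']),
                      (wd ''ooxoxoo'', [wd ''ox'']), (wd ''xxoxoxx'', [wd ''ox''])]"
definition rule_delta :: rule where
  "rule_delta = Repl [(wd ''oxoxoxoxo'', [wd ''ooxo''])]"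
definition rule_eps :: rule where
  "rule_eps = Repl [(wd ''ooxoxx'', [wd ''oxox'', wd ''ox'']), (wd ''oxoxoxoxoxox'', [wd ''oxox'', wd ''ox''])]"
definition rule_zeta :: rule where
  "rule_zeta = Repl [(wd ''ooxoo'', [wd ''oox''])]"
definition rule_eta :: rule where
  "rule_eta = Repl [(wd ''ooxo'', [wd ''xxo'', wd ''ox''])]"

text \<open>Rules in priority order alpha, -alpha, beta, -beta, ..., eta, -eta.\<close>
definition asf_rules :: "rule list" where
  "asf_rules = [rule_alpha, neg_rule rule_alpha, Cancel, neg_rule Cancel,
     rule_gamma, neg_rule rule_gamma, rule_delta, neg_rule rule_delta,
     rule_eps, neg_rule rule_eps, rule_zeta, neg_rule rule_zeta,
     rule_eta, neg_rule rule_eta]"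

definition asf_step :: "game \<Rightarrow> game \<Rightarrow> bool" where
  "asf_step g g' \<longleftrightarrow> (\<exists>i < length asf_rules. rule_res (asf_rules ! i) g g' \<and>
                        (\<forall>j < i. \<not> applicable (asf_rules ! j) g))"

definition standard_form :: "game \<Rightarrow> bool" where
  "standard_form g \<longleftrightarrow> (\<forall>\<rho>\<in>set asf_rules. \<not> applicable \<rho> g)"

definition ASF :: "game \<Rightarrow> game \<Rightarrow> bool" where
  "ASF h g' \<longleftrightarrow> asf_step\<^sup>*\<^sup>* h g' \<and> standard_form g'"

definition a_part :: "nat \<Rightarrow> part" where  \<comment> \<open>a(2n) = (ox)^n\<close>
  "a_part n = concat (replicate n [W, B])"
definition o_odd :: "nat \<Rightarrow> part" where  \<comment> \<open>o(2t+1) = o(xo)^t\<close>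
  "o_odd t = W # concat (replicate t [B, W])"
definition oo_even :: "nat \<Rightarrow> part" where  \<comment> \<open>oo(2t) = oo(xo)^(t-1)\<close>
  "oo_even t = [W, W] @ concat (replicate (t - 1) [B, W])"
definition oo_odd :: "nat \<Rightarrow> part" where  \<comment> \<open>oo(2t+1) = o(ox)^t\<close>
  "oo_odd t = W # concat (replicate t [W, B])"
definition oo_odd_oo :: "nat \<Rightarrow> part" where  \<comment> \<open>oo(2t+1)oo = oo(xo)^(t-1)o\<close>
  "oo_odd_oo t = [W, W] @ concat (replicate (t - 1) [B, W]) @ [W]"

definition setO :: "part set" where "setO = {o_odd t | t. t \<ge> 2 \<and> t \<noteq> 4}"
definition setoO :: "part set" where "setoO = {oo_even t | t. t \<ge> 5}"
definition setoOo :: "part set" where "setoOo = {wd ''oox''} \<union> {oo_odd_oo t | t. t \<ge> 4}"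
definition setI :: "part set" where "setI = {a_part 1, a_part 2, oo_even 3}"
definition setX :: "part set" where "setX = {wd ''xxo''}"
definition setF :: "part set" where "setF = {oo_even 4}"
definition setA :: "part set" where "setA = {a_part n | n. n \<ge> 4 \<and> n \<noteq> 6}"
definition setoA :: "part set" where "setoA = {oo_odd t | t. t \<ge> 3}"

definition setK :: "part set" where
  "setK = setO \<union> setoO \<union> setoOo \<union> setI \<union> setX \<union> setF \<union> setA \<union> setoA"

definition cnt :: "part set \<Rightarrow> game \<Rightarrow> nat" where
  "cnt A g = size (filter_mset (\<lambda>p. in_up p A) g)"

definition game_is :: "game \<Rightarrow> part list \<Rightarrow> bool" where
  "game_is g L \<longleftrightarrow> (\<exists>ps. list_all2 same_part ps L \<and> g = mset ps)"

definition inQ :: "game \<Rightarrow> bool" where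
  "inQ g \<longleftrightarrow> game_is g [o_odd 2, a_part 1] \<or> game_is g [o_odd 3, a_part 2]
            \<or> game_is g [o_odd 7, a_part 2, a_part 1]"

definition dom_K :: "game \<Rightarrow> bool" where
  "dom_K g \<longleftrightarrow> standard_form g \<and> (\<forall>p\<in>#g. in_up p setK)"

definition S0 :: "game set" where
  "S0 = {g. dom_K g \<and>
     ((cnt setA g = 1 \<and> cnt setoA g = 0 \<and> cnt setO g \<ge> cnt setoOo g) \<or>
      (cnt setA g = 0 \<and> cnt setoA g = 0 \<and> cnt setO g \<ge> cnt setoOo g) \<or>
      (cnt setA g = 0 \<and> cnt setoA g = 1 \<and> cnt setO g \<ge> cnt setoOo g + 1))}"

definition S1 :: "game set" where
  "S1 = {g. dom_K g \<and> g \<noteq> {#} \<and> cnt setA g = 0 \<and> cnt setoA g = 0 \<and>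
            cnt setO g \<ge> cnt setoOo g + 1 \<and> \<not> inQ g}"

definition S2 :: "game set" where
  "S2 = {g. dom_K g \<and> g \<noteq> {#} \<and> cnt setA g = 0 \<and> cnt setoA g = 0 \<and> cnt setO g = 0 \<and>
            cnt setoO g = 0 \<and> cnt setoOo g = 0 \<and> cnt setX g \<ge> 1 \<and>
            (cnt setI g = 0 \<or> cnt setI g + cnt setX g \<ge> 3)}"

end

theory Submission
  imports Defs
begin



fun alt :: "stone \<Rightarrow> nat \<Rightarrow> part" where
  "alt s 0 = []" | "alt s (Suc n) = s # alt (swap s) n"

lemma alt_numeral[simp]: "alt s (numeral k) = s # alt (swap s) (pred_numeral k)"
  by (simp add: numeral_eq_Suc)

lemma swap_swap[simp]: "swap (swap s) = s" by (cases s) auto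
lemma swap_neq[simp]: "swap s \<noteq> s" "s \<noteq> swap s" by (cases s, auto)+
lemma swap_W[simp]: "swap s = W \<longleftrightarrow> s = B" "swap s = B \<longleftrightarrow> s = W" by (cases s, auto)+

lemma length_alt[simp]: "length (alt s n) = n"
  by (induction n arbitrary: s) auto

lemma alt_add: "alt s (m + n) = alt s m @ alt (if even m then s else swap s) n"
  by (induction m arbitrary: s) auto

lemma alt_Suc_snoc: "alt s (Suc n) = alt s n @ [if even n then s else swap s]"
  using alt_add[of s n 1] by simp

lemma alt_eq_Nil[simp]: "alt s n = [] \<longleftrightarrow> n = 0" by (cases n) auto

lemma rev_alt: "rev (alt s n) = alt (if even n then swap s else s) n"
proof (induction n arbitrary: s)
  case 0 then show ?case by simp
next
  case (Suc n)
  have "rev (alt s (Suc n)) = rev (alt (swap s) n) @ [s]" by simp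
  also have "\<dots> = alt (if even n then s else swap s) n @ [s]" using Suc by simp
  also have "\<dots> = alt (if even (Suc n) then swap s else s) (Suc n)"
    by (cases "even n") (simp_all add: alt_Suc_snoc del: alt.simps(2))
  finally show ?case .
qed

lemma rev_alt_odd: "odd n \<Longrightarrow> rev (alt s n) = alt s n" by (simp add: rev_alt)
lemma rev_alt_even: "even n \<Longrightarrow> rev (alt s n) = alt (swap s) n" by (simp add: rev_alt)

lemma hd_alt: "n > 0 \<Longrightarrow> hd (alt s n) = s" by (cases n) auto
lemma last_alt: "n > 0 \<Longrightarrow> last (alt s n) = (if even n then swap s else s)"
proof -
  assume "n > 0"
  then obtain m where "n = Suc m" by (cases n) auto
  then show ?thesis by (simp add: alt_Suc_snoc del: alt.simps(2))
qed
lemma nth1_alt: "n > 1 \<Longrightarrow> alt s n ! 1 = swap s"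
  by (cases n; cases "n - 1") auto

lemma alt_split:
  "alt s n = u @ [a, b] @ v \<Longrightarrow>
     length u + 2 \<le> n \<and> u = alt s (length u) \<and> a = (if even (length u) then s else swap s)
     \<and> b = swap a \<and> v = alt a (n - length u - 2)"
proof (induction u arbitrary: s n)
  case Nil
  then obtain m where n: "n = Suc (Suc m)" by (cases n; cases "n - 1") auto
  with Nil show ?case by auto
next
  case (Cons c u)
  then obtain m where n: "n = Suc m" by (cases n) auto
  with Cons.prems have "c = s" "alt (swap s) m = u @ [a, b] @ v" by auto
  from Cons.IH[OF this(2)] show ?case using n \<open>c = s\<close> by auto
qed

lemma alt_B_even: "alt B (2*t) = concat (replicate t [B, W])"
  by (induction t) auto
lemma alt_W_even: "alt W (2*t) = concat (replicate t [W, B])"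
  by (induction t) auto

lemma a_part_alt: "a_part n = alt W (2*n)" by (simp add: a_part_def alt_W_even)
lemma o_odd_alt: "o_odd t = alt W (2*t+1)" by (simp add: o_odd_def alt_B_even)
lemma oo_even_alt: "t \<ge> 1 \<Longrightarrow> oo_even t = W # alt W (2*t-1)"
proof -
  assume "t \<ge> 1" then obtain k where "t = Suc k" by (cases t) auto
  then show ?thesis by (simp add: oo_even_def alt_B_even[symmetric])
qed
lemma oo_odd_alt: "oo_odd t = W # alt W (2*t)" by (simp add: oo_odd_def alt_W_even)
lemma oo_odd_oo_alt: "t \<ge> 1 \<Longrightarrow> oo_odd_oo t = W # alt W (2*t-1) @ [W]"
proof -
  assume "t \<ge> 1" then obtain k where "t = Suc k" by (cases t) auto
  then show ?thesis by (simp add: oo_odd_oo_def alt_B_even[symmetric])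
qed

lemma same_part_refl[simp]: "same_part p p" by (simp add: same_part_def)
lemma same_part_sym: "same_part p q \<Longrightarrow> same_part q p" by (auto simp: same_part_def)
lemma same_part_trans: "same_part p q \<Longrightarrow> same_part q r \<Longrightarrow> same_part p r"
  by (auto simp: same_part_def)
lemma same_part_rev[simp]: "same_part (rev p) q \<longleftrightarrow> same_part p q"
  "same_part p (rev q) \<longleftrightarrow> same_part p q"
  by (auto simp: same_part_def)

lemma in_up_same: "same_part p q \<Longrightarrow> in_up p A \<longleftrightarrow> in_up q A"
  unfolding in_up_def by (meson same_part_sym same_part_trans)
lemma in_up_rev[simp]: "in_up (rev p) A \<longleftrightarrow> in_up p A"
  by (simp add: in_up_def)
lemma in_up_I: "q \<in> A \<Longrightarrow> same_part p q \<Longrightarrow> in_up p A"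
  by (auto simp: in_up_def)
lemma in_up_insert: "in_up p (insert a A) \<longleftrightarrow> same_part p a \<or> in_up p A"
  by (auto simp: in_up_def)
lemma in_up_empty[simp]: "\<not> in_up p {}" by (simp add: in_up_def)

lemma negp_rev: "negp (rev p) = rev (negp p)" by (simp add: negp_def rev_map)
lemma negp_negp[simp]: "negp (negp p) = p"
  by (simp add: negp_def map_idI)
lemma same_part_negp_sym: "same_part q (negp p) \<Longrightarrow> same_part p (negp q)"
  by (auto simp: same_part_def negp_rev)
lemma same_part_negp: "same_part p q \<Longrightarrow> same_part (negp p) (negp q)"
  by (auto simp: same_part_def negp_rev)

definition ind :: "part set \<Rightarrow> part \<Rightarrow> nat" where
  "ind A p = (if in_up p A then 1 else 0)"

lemma cnt_empty[simp]: "cnt A {#} = 0" by (simp add: cnt_def)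
lemma cnt_plus[simp]: "cnt A (M + N) = cnt A M + cnt A N" by (simp add: cnt_def)
lemma cnt_single[simp]: "cnt A {#p#} = ind A p" by (simp add: cnt_def ind_def)
lemma cnt_add_mset[simp]: "cnt A (add_mset p M) = ind A p + cnt A M"
  by (simp add: cnt_def ind_def)
lemma cnt_remove: "p \<in># M \<Longrightarrow> cnt A M = cnt A (M - {#p#}) + ind A p"
proof -
  assume "p \<in># M"
  then have "M = add_mset p (M - {#p#})" by simp
  then show ?thesis by (metis add.commute cnt_add_mset)
qed
lemma ind_same: "same_part p q \<Longrightarrow> ind A p = ind A q"
  by (simp add: ind_def in_up_same)
lemma ind_rev[simp]: "ind A (rev p) = ind A p" by (simp add: ind_def)
lemma ind_le1: "ind A p \<le> 1" by (simp add: ind_def)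




definition C1 :: "part set" where "C1 = {wd ''oox'', wd ''ooxoo''}"
definition C2 :: "part set" where "C2 = {oo_odd_oo t | t. t \<ge> 4}"

definition allowed :: "part \<Rightarrow> bool" where
  "allowed q \<longleftrightarrow> same_part q [B] \<or> same_part q [B,B,W] \<or> (\<exists>n\<ge>1. same_part q (alt W n))
     \<or> (\<exists>n. same_part q (W # alt W n)) \<or> (\<exists>t. same_part q (W # alt W (2*t+1) @ [W]))"

definition wk :: "part \<Rightarrow> bool" where
  "wk q \<longleftrightarrow> q \<noteq> [] \<and> (q = [B] \<or> same_part q [B,B,W] \<or> hd q = W \<or> last q = W)"

lemma wd_xxo[simp]: "wd ''xxo'' = [B,B,W]" by (simp add: wd_def)
lemma wd_oox[simp]: "wd ''oox'' = [W,W,B]" by (simp add: wd_def)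
lemma wd_ooxoo[simp]: "wd ''ooxoo'' = [W,W,B,W,W]" by (simp add: wd_def)

lemma allowed_same: "same_part p q \<Longrightarrow> allowed p \<longleftrightarrow> allowed q"
  unfolding allowed_def by (meson same_part_sym same_part_trans)
lemma allowed_rev[simp]: "allowed (rev p) \<longleftrightarrow> allowed p"
  by (rule allowed_same) (simp add: same_part_def)

lemma wk_of_hd: "q \<noteq> [] \<Longrightarrow> hd q = W \<Longrightarrow> same_part p q \<Longrightarrow> wk p"
  by (auto simp: wk_def same_part_def hd_rev last_rev)

lemma allowed_wk: "allowed q \<Longrightarrow> wk q"
  unfolding allowed_def
proof (elim disjE exE conjE)
  assume "same_part q [B]" then show "wk q" by (auto simp: wk_def same_part_def)
next
  assume "same_part q [B,B,W]" then show "wk q" by (auto simp: wk_def same_part_def)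
next
  fix n assume "1 \<le> n" "same_part q (alt W n)"
  then show "wk q" by (intro wk_of_hd[of "alt W n"]) (auto simp: hd_alt)
next
  fix n assume "same_part q (W # alt W n)"
  then show "wk q" by (intro wk_of_hd[of "W # alt W n"]) auto
next
  fix t assume "same_part q (W # alt W (2*t+1) @ [W])"
  then show "wk q" by (intro wk_of_hd[of "W # alt W (2*t+1) @ [W]"]) auto
qed

lemma allowed_alt: "n \<ge> 1 \<Longrightarrow> same_part q (alt W n) \<Longrightarrow> allowed q"
  by (auto simp: allowed_def)
lemma allowed_Walt: "same_part q (W # alt W n) \<Longrightarrow> allowed q"
  by (auto simp: allowed_def)
lemma allowed_WaltW: "same_part q (W # alt W (2*t+1) @ [W]) \<Longrightarrow> allowed q"
  by (auto simp: allowed_def)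
lemma allowed_concrete[simp]:
  "allowed [W,B]" "allowed [B,W]" "allowed [W,W,B,W]" "allowed [W,B,W,B]" "allowed [B,W,B,W]"
  "allowed [W,W,B]" "allowed [B,B,W]" "allowed [B]" "allowed [W]" "allowed [W,W]"
  "allowed [B,W,W]"
  by (auto simp: allowed_def same_part_def intro: exI[of _ 2] exI[of _ 3] exI[of _ 4] exI[of _ 1]
           exI[of _ 0])

lemma in_up_setO: "in_up q setO \<Longrightarrow> q = alt W (length q) \<and> odd (length q) \<and> length q \<ge> 5 \<and> length q \<noteq> 9"
proof -
  assume "in_up q setO"
  then obtain t where t: "t \<ge> 2" "t \<noteq> 4" "q = o_odd t \<or> q = rev (o_odd t)"
    by (auto simp: in_up_def setO_def same_part_def)
  have "rev (alt W (2*t+1)) = alt W (2*t+1)" by (intro rev_alt_odd) auto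
  then have "q = alt W (2*t+1)" using t by (auto simp: o_odd_alt simp del: alt.simps)
  then show ?thesis using t by (auto simp del: alt.simps)
qed

lemma in_up_setA: "in_up q setA \<Longrightarrow> (q = alt W (length q) \<or> q = alt B (length q)) \<and> even (length q)
    \<and> length q \<ge> 8 \<and> length q \<noteq> 12"
  by (auto simp: in_up_def setA_def same_part_def a_part_alt rev_alt_even)

lemma in_up_setoA: "in_up q setoA \<Longrightarrow> (q = W # alt W (length q - 1) \<or> rev q = W # alt W (length q - 1))
   \<and> odd (length q) \<and> length q \<ge> 7"
  by (auto simp: in_up_def setoA_def same_part_def oo_odd_alt)

lemma in_up_C2: "in_up q C2 \<Longrightarrow> q = W # alt W (length q - 2) @ [W] \<and> odd (length q) \<and> length q \<ge> 9"
proof -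
  assume "in_up q C2"
  then obtain t where t: "t \<ge> 4" "q = oo_odd_oo t \<or> q = rev (oo_odd_oo t)"
    by (auto simp: in_up_def C2_def same_part_def)
  have e: "oo_odd_oo t = W # alt W (2*t-1) @ [W]" using t by (simp add: oo_odd_oo_alt)
  have "rev (alt W (2*t-1)) = alt W (2*t-1)" using t by (intro rev_alt_odd) auto
  then have "rev (oo_odd_oo t) = oo_odd_oo t" using e by simp
  then have "q = W # alt W (2*t-1) @ [W]" using t e by auto
  then show ?thesis using t by auto
qed

lemma in_up_C1: "in_up q C1 \<longleftrightarrow> same_part q [W,W,B] \<or> same_part q [W,W,B,W,W]"
  by (simp add: C1_def in_up_insert)
lemma in_up_setX: "in_up q setX \<longleftrightarrow> same_part q [B,B,W]"
  by (simp add: setX_def in_up_insert)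

lemma C1_len: "in_up q C1 \<Longrightarrow> length q = 3 \<or> length q = 5"
  by (auto simp: in_up_C1 same_part_def)

lemma hd_last_A: "in_up q setA \<Longrightarrow> hd q \<noteq> last q"
  using in_up_setA[of q] by (auto simp: hd_alt last_alt)

lemma hd_last_oA: "in_up q setoA \<Longrightarrow> hd q \<noteq> last q"
proof -
  assume a: "in_up q setoA"
  define n where "n = length q - 1"
  from in_up_setoA[OF a] have n: "n \<ge> 6" "even n" and
    d: "q = W # alt W n \<or> rev q = W # alt W n" by (auto simp: n_def)
  have l: "last (alt W n) = B" using n by (simp add: last_alt)
  from d show ?thesis
  proof
    assume "q = W # alt W n" then show ?thesis using l n by auto
  next
    assume r: "rev q = W # alt W n"
    have "q \<noteq> []" using n n_def by auto
    have "last q = hd (rev q)" using \<open>q \<noteq> []\<close> by (simp add: hd_rev)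
    moreover have "hd q = last (rev q)" using \<open>q \<noteq> []\<close> by (simp add: last_rev)
    ultimately show ?thesis using r l n by auto
  qed
qed

lemma not_in_up_Nil: "\<not> in_up [] setO" "\<not> in_up [] setA" "\<not> in_up [] setoA" "\<not> in_up [] C2"
  "\<not> in_up [] C1" "\<not> in_up [] setX"
  using in_up_setO[of "[]"] in_up_setA[of "[]"] in_up_setoA[of "[]"] in_up_C2[of "[]"]
  by (auto simp: in_up_C1 in_up_setX same_part_def)

lemma short_piece:
  assumes "length q \<le> 4"
  shows "ind setO q = 0" "ind setA q = 0" "ind setoA q = 0" "ind C2 q = 0"
  using assms in_up_setO[of q] in_up_setA[of q] in_up_setoA[of q] in_up_C2[of q]
  by (auto simp: ind_def)

lemma even_piece:
  assumes "even (length q)"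
  shows "ind setO q = 0" "ind setoA q = 0" "ind C2 q = 0" "ind C1 q = 0"
  using assms in_up_setO[of q] in_up_setoA[of q] in_up_C2[of q] C1_len[of q]
  by (auto simp: ind_def)

lemma hdlast_piece:
  assumes "q \<noteq> []" "hd q = W" "last q = W"
  shows "ind setA q = 0" "ind setoA q = 0"
  using assms hd_last_A[of q] hd_last_oA[of q] by (auto simp: ind_def)

lemma T_le1: "ind C2 q + ind C1 q + ind setoA q \<le> 1"
proof -
  have "\<not> (in_up q C2 \<and> in_up q C1)" using in_up_C2[of q] C1_len[of q] by auto
  moreover have "\<not> (in_up q C1 \<and> in_up q setoA)" using in_up_setoA[of q] C1_len[of q] by auto
  moreover have "\<not> (in_up q C2 \<and> in_up q setoA)"
  proof
    assume a: "in_up q C2 \<and> in_up q setoA"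
    then have "q = W # alt W (length q - 2) @ [W]" using in_up_C2 by blast
    then have "hd q = last q" by (metis last_ConsR last_snoc list.sel(1) snoc_eq_iff_butlast)
    then show False using a hd_last_oA by blast
  qed
  ultimately show ?thesis by (auto simp: ind_def)
qed

lemma yz_le1: "ind setA q + ind setoA q \<le> 1"
  using in_up_setA[of q] in_up_setoA[of q] by (auto simp: ind_def)




definition movesR :: "part \<Rightarrow> part \<Rightarrow> part \<Rightarrow> bool" where
  "movesR f x y \<longleftrightarrow> (\<exists>u v. f = u @ [B,W] @ v \<and> x = u @ [W] \<and> y = v) \<or>
                      (\<exists>u v. f = u @ [W,B] @ v \<and> x = u \<and> y = W # v)"

lemma movesR_rev: "movesR (rev f) x y \<Longrightarrow> movesR f (rev y) (rev x)"
  unfolding movesR_def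
proof (elim disjE exE conjE)
  fix u v assume "rev f = u @ [B, W] @ v" "x = u @ [W]" "y = v"
  then have "f = rev v @ [W,B] @ rev u" by (metis append.assoc rev_append rev_rev_ident rev_singleton_conv
        rev.simps)
  then show "(\<exists>u v. f = u @ [B, W] @ v \<and> rev y = u @ [W] \<and> rev x = v) \<or>
    (\<exists>u v. f = u @ [W, B] @ v \<and> rev y = u \<and> rev x = W # v)"
    using \<open>x = u @ [W]\<close> \<open>y = v\<close> by auto
next
  fix u v assume "rev f = u @ [W, B] @ v" "x = u" "y = W # v"
  then have "f = rev v @ [B,W] @ rev u" by (metis append.assoc rev_append rev_rev_ident rev_singleton_conv
        rev.simps)
  then show "(\<exists>u v. f = u @ [B, W] @ v \<and> rev y = u @ [W] \<and> rev x = v) \<or>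
    (\<exists>u v. f = u @ [W, B] @ v \<and> rev y = u \<and> rev x = W # v)"
    using \<open>x = u\<close> \<open>y = W # v\<close> by auto
qed

definition Tq :: "part \<Rightarrow> nat" where "Tq q = ind C2 q + ind C1 q + ind setoA q"
definition Yq :: "part \<Rightarrow> nat" where "Yq q = ind setA q + ind setoA q"

definition Good :: "part \<Rightarrow> part \<Rightarrow> part \<Rightarrow> bool" where
  "Good f x y \<longleftrightarrow> (x = [] \<or> allowed x) \<and> (y = [] \<or> allowed y) \<and> Yq x + Yq y \<le> 1 \<and>
     Tq x + Tq y + ind setO f \<le> 1 + ind C2 f + ind C1 f"

definition Small :: "part \<Rightarrow> part \<Rightarrow> part \<Rightarrow> bool" where
  "Small f x y \<longleftrightarrow> ind C2 x + ind C2 y = 0 \<and> ind setoA x + ind setoA y = 0 \<and>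
     ind C1 x + ind C1 y + ind setX f \<le> 1"

lemma Tq_le1: "Tq q \<le> 1" using T_le1 by (simp add: Tq_def)
lemma Yq_le1: "Yq q \<le> 1" using yz_le1 by (simp add: Yq_def)

lemma odd_piece: "odd (length q) \<Longrightarrow> ind setA q = 0"
  using in_up_setA[of q] by (auto simp: ind_def)

lemma piece_E: "even (length q) \<Longrightarrow> q \<noteq> [] \<Longrightarrow> hd q = W \<Longrightarrow> last q = W \<Longrightarrow> Tq q = 0 \<and> Yq q = 0"
  using even_piece[of q] hdlast_piece[of q] by (simp add: Tq_def Yq_def)
lemma piece_e: "even (length q) \<Longrightarrow> Tq q = 0 \<and> ind setoA q = 0"
  using even_piece[of q] by (simp add: Tq_def)
lemma piece_hl: "q \<noteq> [] \<Longrightarrow> hd q = W \<Longrightarrow> last q = W \<Longrightarrow> Yq q = 0"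
  using hdlast_piece[of q] by (simp add: Yq_def)

lemma Good_sym: "Good f x y \<Longrightarrow> Good f y x" by (auto simp: Good_def)
lemma Small_sym: "Small f x y \<Longrightarrow> Small f y x" by (auto simp: Small_def)
lemma Good_rev: "Good f x y \<Longrightarrow> Good f (rev x) (rev y)"
  by (auto simp: Good_def Tq_def Yq_def)
lemma Small_rev: "Small f x y \<Longrightarrow> Small f (rev x) (rev y)"
  by (auto simp: Small_def)

lemma piece_altB_even:
  assumes "even m"
  shows "(alt B m = [] \<or> allowed (alt B m)) \<and> Tq (alt B m) = 0 \<and> ind setoA (alt B m) = 0"
proof -
  have "rev (alt B m) = alt W m" using assms by (simp add: rev_alt_even)
  then have "m \<ge> 1 \<Longrightarrow> allowed (alt B m)"
    by (metis allowed_alt allowed_rev same_part_refl)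
  then show ?thesis using piece_e[of "alt B m"] assms by (cases m) auto
qed

section \<open>Family 1: alt W (2t+1)\<close>

lemma fam1:
  assumes "movesR (alt W (2*t+1)) x y"
  shows "Good (alt W (2*t+1)) x y"
  using assms unfolding movesR_def
proof (elim disjE exE conjE)
  fix u v assume f: "alt W (2*t+1) = u @ [B,W] @ v" and xy: "x = u @ [W]" "y = v"
  define i where "i = length u"
  from alt_split[OF f] have i: "i + 2 \<le> 2*t+1" "u = alt W i" "odd i" "v = alt B (2*t+1-i-2)"
    by (auto simp: i_def split: if_splits)
  have rx: "rev x = W # alt W i" using xy i by (simp add: rev_alt_odd)
  have ax: "allowed x" using rx by (metis allowed_Walt allowed_rev same_part_refl)
  have lx: "last x = W" "x \<noteq> []" using xy by auto
  have hx: "hd x = W" using xy i by (cases i) auto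
  have ex: "even (length x)" using xy i by simp
  from piece_E[OF ex lx(2) hx lx(1)] have px: "Tq x = 0" "Yq x = 0" by auto
  have ey: "even (2*t+1-i-2)" using i by auto
  from piece_altB_even[OF ey] have py: "y = [] \<or> allowed y" "Tq y = 0" using xy i by auto
  have "Yq y \<le> 1" by (rule Yq_le1)
  moreover have "ind setO (alt W (2*t+1)) \<le> 1" by (rule ind_le1)
  ultimately show "Good (alt W (2*t+1)) x y" using ax px py
    by (auto simp: Good_def)
next
  fix u v assume f: "alt W (2*t+1) = u @ [W,B] @ v" and xy: "x = u" "y = W # v"
  define i where "i = length u"
  from alt_split[OF f] have i: "i + 2 \<le> 2*t+1" "u = alt W i" "even i" "v = alt W (2*t+1-i-2)"
    by (auto simp: i_def split: if_splits)
  have ax: "x = [] \<or> allowed x" using xy i by (metis allowed_alt alt_eq_Nil less_one not_le same_part_refl)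
  have ey: "even (length y)" using xy i by auto
  have ly: "last y = W"
  proof (cases "2*t+1-i-2 = 0")
    case True then show ?thesis using xy i by simp
  next
    case False then show ?thesis using xy i by (simp add: last_alt)
  qed
  from piece_E[OF ey _ _ ly] have py: "Tq y = 0" "Yq y = 0" using xy by auto
  have ay: "allowed y" using xy i by (metis allowed_Walt same_part_refl)
  have "Yq x \<le> 1" by (rule Yq_le1)
  moreover have "Tq x = 0" using piece_e[of x] xy i by simp
  moreover have "ind setO (alt W (2*t+1)) \<le> 1" by (rule ind_le1)
  ultimately show "Good (alt W (2*t+1)) x y" using ax ay py
    by (auto simp: Good_def)
qed

lemma len_zero:
  "length q < 9 \<Longrightarrow> ind C2 q = 0" "length q < 7 \<Longrightarrow> ind setoA q = 0"
  "length q \<noteq> 3 \<Longrightarrow> ind setX q = 0" "length q < 5 \<Longrightarrow> ind setO q = 0"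
  using in_up_C2[of q] in_up_setoA[of q] in_up_setO[of q]
  by (auto simp: ind_def in_up_setX same_part_def)

lemma cons_split: "c # L = u @ a # R \<Longrightarrow> a \<noteq> c \<Longrightarrow> \<exists>u'. u = c # u' \<and> L = u' @ a # R"
  by (cases u) auto

lemma snoc_split:
  assumes "L @ [c] = u @ [a,b] @ v" "L \<noteq> []" "b = c \<Longrightarrow> last L \<noteq> a"
  shows "\<exists>v'. v = v' @ [c] \<and> L = u @ [a,b] @ v'"
proof (cases v rule: rev_exhaust)
  case Nil
  then have "L @ [c] = (u @ [a]) @ [b]" using assms(1) by simp
  then have "L = u @ [a]" "b = c" by auto
  then show ?thesis using assms(3) by simp
next
  case (snoc v' d)
  then have "L @ [c] = (u @ [a,b] @ v') @ [d]" using assms(1) by simp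
  then show ?thesis using snoc by auto
qed

section \<open>Family 2: W # alt W (2t+1)\<close>

lemma fam2:
  assumes "movesR (W # alt W (2*t+1)) x y"
  shows "Good (W # alt W (2*t+1)) x y \<and> (t \<le> 3 \<longrightarrow> Small (W # alt W (2*t+1)) x y)"
proof -
  define n where "n = 2*t+1"
  define f where "f = W # alt W n"
  have fe: "even (length f)" by (simp add: f_def n_def)
  have "length f \<noteq> 3" using fe by (metis even_numeral odd_numeral numeral_3_eq_3 odd_one even_Suc)
  then have f0: "ind setO f = 0" "ind setX f = 0" using even_piece[OF fe] len_zero(3)[of f] by auto
  have "Good f x y \<and> (t \<le> 3 \<longrightarrow> Small f x y)"
    using assms[folded n_def, folded f_def] unfolding movesR_def
  proof (elim disjE exE conjE)
    fix u v assume F: "f = u @ [B,W] @ v" and xy: "x = u @ [W]" "y = v"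
    from cons_split[of W "alt W n" u B "W # v"] F obtain u' where
      u': "u = W # u'" "alt W n = u' @ [B,W] @ v" by (auto simp: f_def)
    define i where "i = length u'"
    from alt_split[OF u'(2)] have i: "i + 2 \<le> n" "u' = alt W i" "odd i" "v = alt B (n-i-2)"
      by (auto simp: i_def split: if_splits)
    then obtain k where k: "i = 2*k+1" using oddE by blast
    have xs: "x = W # alt W (2*k+1) @ [W]" using xy u' i k by simp
    have ax: "allowed x" using xs allowed_WaltW[of x k] by simp
    have Yx: "Yq x = 0" using xs by (intro piece_hl) auto
    have ey: "even (n-i-2)" using i n_def by auto
    from piece_altB_even[OF ey] have py: "y = [] \<or> allowed y" "Tq y = 0" "ind setoA y = 0"
      using xy i by auto
    have "Yq y \<le> 1" "Tq x \<le> 1" by (rule Yq_le1, rule Tq_le1)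
    then have G: "Good f x y" using ax py Yx f0 by (auto simp: Good_def)
    have "t \<le> 3 \<Longrightarrow> Small f x y"
    proof -
      assume "t \<le> 3"
      then have "length x < 9" using xs i k n_def by simp
      then have "ind C2 x = 0" by (rule len_zero)
      moreover have "ind setoA x = 0" using Yx by (simp add: Yq_def)
      moreover have "ind C1 x \<le> 1" by (rule ind_le1)
      ultimately show ?thesis using py f0 by (simp add: Small_def Tq_def)
    qed
    then show ?thesis using G by blast
  next
    fix u v assume F: "f = u @ [W,B] @ v" and xy: "x = u" "y = W # v"
    have "u \<noteq> []"
    proof
      assume "u = []"
      then have "alt W n = B # v" using F by (simp add: f_def)
      then show False using n_def by simp
    qed
    then obtain u' where u': "u = W # u'" "alt W n = u' @ [W,B] @ v" using F
      by (cases u) (auto simp: f_def)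
    define i where "i = length u'"
    from alt_split[OF u'(2)] have i: "i + 2 \<le> n" "u' = alt W i" "even i" "v = alt W (n-i-2)"
      by (auto simp: i_def split: if_splits)
    have xs: "x = W # alt W i" using xy u' i by simp
    have ax: "allowed x" using xs allowed_Walt[of x i] by simp
    have ys: "y = W # alt W (n-i-2)" using xy i by simp
    have ay: "allowed y" using ys allowed_Walt[of y "n-i-2"] by simp
    have ey: "even (length y)" using ys i n_def by auto
    have ly: "last y = W"
    proof (cases "n-i-2 = 0")
      case True then show ?thesis using ys by simp
    next
      case False then show ?thesis using ys i n_def by (simp add: last_alt)
    qed
    from piece_E[OF ey _ _ ly] have py: "Tq y = 0" "Yq y = 0" using ys by auto
    have "Yq x \<le> 1" "Tq x \<le> 1" by (rule Yq_le1, rule Tq_le1)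
    then have G: "Good f x y" using ax ay py f0 by (auto simp: Good_def)
    have "t \<le> 3 \<Longrightarrow> Small f x y"
    proof -
      assume "t \<le> 3"
      then have "length x < 7" using xs i n_def by simp
      then have "ind C2 x = 0" "ind setoA x = 0" by (auto intro: len_zero)
      moreover have "ind C1 x \<le> 1" by (rule ind_le1)
      ultimately show ?thesis using py f0 by (simp add: Small_def Tq_def Yq_def)
    qed
    then show ?thesis using G by blast
  qed
  then show ?thesis by (simp add: f_def n_def)
qed

section \<open>Family 3: W # alt W (2t+1) @ [W]\<close>

lemma fam3:
  assumes "movesR (W # alt W (2*t+1) @ [W]) x y" "t \<ge> 3"
  shows "Good (W # alt W (2*t+1) @ [W]) x y"
proof -
  define n where "n = 2*t+1"
  define f where "f = W # alt W n @ [W]"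
  have "oo_odd_oo (t+1) = f" by (simp add: oo_odd_oo_alt f_def n_def del: alt.simps)
  then have "f \<in> C2" using assms(2) unfolding C2_def by (intro CollectI exI[of _ "t+1"]) auto
  then have fC2: "ind C2 f = 1" by (simp add: ind_def in_up_I)
  have f1: "f ! 1 = W" by (simp add: f_def n_def)
  have fO: "ind setO f = 0"
  proof (rule ccontr)
    assume "ind setO f \<noteq> 0"
    then have "in_up f setO" by (simp add: ind_def split: if_splits)
    from in_up_setO[OF this] have "f = alt W (length f)" "length f \<ge> 5" by auto
    then have "f ! 1 = B" using nth1_alt[of "length f" W] by simp
    then show False using f1 by simp
  qed
  have ln: "alt W n \<noteq> []" "last (alt W n) = W" by (auto simp: n_def last_alt)
  have "Tq x \<le> 1" "Tq y \<le> 1" by (rule Tq_le1)+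
  then have T: "Tq x + Tq y + ind setO f \<le> 1 + ind C2 f + ind C1 f" using fC2 fO by simp
  have "Good f x y"
    using assms(1)[folded n_def, folded f_def] unfolding movesR_def
  proof (elim disjE exE conjE)
    fix u v assume F: "f = u @ [B,W] @ v" and xy: "x = u @ [W]" "y = v"
    from cons_split[of W "alt W n @ [W]" u B "W # v"] F obtain u' where
      u': "u = W # u'" "alt W n @ [W] = u' @ [B,W] @ v" by (auto simp: f_def)
    from snoc_split[OF u'(2) ln(1)] ln(2) obtain v' where
      v': "v = v' @ [W]" "alt W n = u' @ [B,W] @ v'" by auto
    define i where "i = length u'"
    from alt_split[OF v'(2)] have i: "i + 2 \<le> n" "u' = alt W i" "odd i" "v' = alt B (n-i-2)"
      by (auto simp: i_def split: if_splits)
    then obtain k where k: "i = 2*k+1" using oddE by blast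
    have xs: "x = W # alt W (2*k+1) @ [W]" using xy u' i k by simp
    have ax: "allowed x" using xs allowed_WaltW[of x k] by simp
    have Yx: "Yq x = 0" using xs by (intro piece_hl) auto
    have ey: "even (n-i-2)" using i n_def by auto
    have ys: "y = alt B (n-i-2) @ [W]" using xy v' i by simp
    have "rev y = W # alt W (n-i-2)" using ys ey by (simp add: rev_alt_even)
    then have ay: "allowed y" by (metis allowed_Walt allowed_rev same_part_refl)
    have "Yq y \<le> 1" by (rule Yq_le1)
    then show "Good f x y" using ax ay Yx T by (auto simp: Good_def)
  next
    fix u v assume F: "f = u @ [W,B] @ v" and xy: "x = u" "y = W # v"
    have "u \<noteq> []"
    proof
      assume "u = []"
      then have "alt W n @ [W] = B # v" using F by (simp add: f_def)
      then show False using n_def by simp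
    qed
    then obtain u' where u': "u = W # u'" "alt W n @ [W] = u' @ [W,B] @ v" using F
      by (cases u) (auto simp: f_def)
    from snoc_split[OF u'(2) ln(1)] obtain v' where
      v': "v = v' @ [W]" "alt W n = u' @ [W,B] @ v'" by auto
    define i where "i = length u'"
    from alt_split[OF v'(2)] have i: "i + 2 \<le> n" "u' = alt W i" "even i" "v' = alt W (n-i-2)"
      by (auto simp: i_def split: if_splits)
    have xs: "x = W # alt W i" using xy u' i by simp
    have ax: "allowed x" using xs allowed_Walt[of x i] by simp
    have "odd (n-i-2)" using i n_def by auto
    then obtain m where m: "n-i-2 = 2*m+1" using oddE by blast
    have ys: "y = W # alt W (2*m+1) @ [W]" using xy v' i m by simp
    have ay: "allowed y" using ys allowed_WaltW[of y m] by simp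
    have Yy: "Yq y = 0" using ys by (intro piece_hl) auto
    have "Yq x \<le> 1" by (rule Yq_le1)
    then show "Good f x y" using ax ay Yy T by (auto simp: Good_def)
  qed
  then show ?thesis by (simp add: f_def n_def)
qed




lemma ind_short[simp]: "length q \<le> 4 \<Longrightarrow> ind setO q = 0"
  "length q \<le> 4 \<Longrightarrow> ind setA q = 0" "length q \<le> 4 \<Longrightarrow> ind setoA q = 0"
  "length q \<le> 4 \<Longrightarrow> ind C2 q = 0"
  using short_piece by auto

lemma ind_C1_eq: "ind C1 q = (if same_part q [W,W,B] \<or> same_part q [W,W,B,W,W] then 1 else 0)"
  by (simp add: ind_def in_up_C1)
lemma ind_X_eq: "ind setX q = (if same_part q [B,B,W] then 1 else 0)"
  by (simp add: ind_def in_up_setX)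

lemma mv1: "movesR [W,B,W,B] x y \<Longrightarrow> (x = [W,W] \<and> y = [B]) \<or> (x = [] \<and> y = [W,W,B]) \<or> (x = [W,B] \<and> y = [W])"
  by (auto simp: movesR_def append_eq_Cons_conv Cons_eq_append_conv)
lemma mv2: "movesR [W,B] x y \<Longrightarrow> (x = [] \<and> y = [W])"
  by (auto simp: movesR_def append_eq_Cons_conv Cons_eq_append_conv)
lemma mv3: "movesR [W,W,B] x y \<Longrightarrow> (x = [W] \<and> y = [W])"
  by (auto simp: movesR_def append_eq_Cons_conv Cons_eq_append_conv)
lemma mv4: "movesR [B,B,W] x y \<Longrightarrow> (x = [B,W] \<and> y = [])"
  by (auto simp: movesR_def append_eq_Cons_conv Cons_eq_append_conv)

lemma short_TY: "length q \<le> 4 \<Longrightarrow> Tq q = ind C1 q \<and> Yq q = 0"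
  by (simp add: Tq_def Yq_def)
lemma c1: "ind C1 [] = 0" "ind C1 [W] = 0" "ind C1 [B] = 0" "ind C1 [W,W] = 0" "ind C1 [W,B] = 0"
  "ind C1 [B,W] = 0" "ind C1 [W,W,B] = 1"
  by (simp_all add: ind_C1_eq same_part_def)
lemma x1: "ind setX [W,B] = 0" "ind setX [W,B,W,B] = 0" "ind setX [W,W,B] = 0" "ind setX [B,B,W] = 1"
  by (simp_all add: ind_X_eq same_part_def)

lemma Good_Small_concrete:
  assumes "movesR f x y" "f \<in> {[W,B], [W,B,W,B], [W,W,B], [B,B,W]}"
  shows "Good f x y \<and> Small f x y"
proof -
  have "(f = [W,B] \<and> x = [] \<and> y = [W]) \<or>
        (f = [W,B,W,B] \<and> ((x = [W,W] \<and> y = [B]) \<or> (x = [] \<and> y = [W,W,B]) \<or> (x = [W,B] \<and> y = [W]))) \<or>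
        (f = [W,W,B] \<and> x = [W] \<and> y = [W]) \<or> (f = [B,B,W] \<and> x = [B,W] \<and> y = [])"
    using assms(2) mv1[of x y] mv2[of x y] mv3[of x y] mv4[of x y] assms(1) by fastforce
  then show ?thesis
    by (elim disjE conjE) (simp_all add: Good_def Small_def short_TY c1 x1)
qed

lemma e1: "a_part 1 = [W,B]" "a_part 2 = [W,B,W,B]" "oo_even 3 = W # alt W (2*2+1)"
  "oo_even 4 = W # alt W (2*3+1)"
  by (simp_all add: a_part_def oo_even_def numeral_eq_Suc)

lemma gO: "q \<in> setO \<Longrightarrow> movesR q x y \<Longrightarrow> Good q x y"
proof -
  assume q: "q \<in> setO" and m: "movesR q x y"
  then obtain t where "q = alt W (2*t+1)" by (auto simp: setO_def o_odd_alt simp del: alt.simps)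
  then show ?thesis using m fam1 by blast
qed

lemma goO: "q \<in> setoO \<Longrightarrow> movesR q x y \<Longrightarrow> Good q x y"
proof -
  assume q: "q \<in> setoO" and m: "movesR q x y"
  then obtain t where t: "t \<ge> 5" "q = oo_even t" by (auto simp: setoO_def)
  moreover have "2*t-1 = 2*(t-1)+1" using t by simp
  ultimately have "q = W # alt W (2*(t-1)+1)" by (simp add: oo_even_alt del: alt.simps)
  then show ?thesis using m fam2 by blast
qed

lemma goOo: "q \<in> setoOo \<Longrightarrow> movesR q x y \<Longrightarrow> Good q x y"
proof -
  assume q: "q \<in> setoOo" and m: "movesR q x y"
  then consider "q = [W,W,B]" | t where "t \<ge> 4" "q = oo_odd_oo t" by (auto simp: setoOo_def)
  then show ?thesis
  proof cases
    case 1 then show ?thesis using m Good_Small_concrete by blast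
  next
    case 2
    moreover have "2*t-1 = 2*(t-1)+1" using 2 by simp
    ultimately have "q = W # alt W (2*(t-1)+1) @ [W]"
      by (simp add: oo_odd_oo_alt del: alt.simps)
    moreover have "t - 1 \<ge> 3" using 2 by simp
    ultimately show ?thesis using m fam3 by blast
  qed
qed

lemma gI: "q \<in> setI \<Longrightarrow> movesR q x y \<Longrightarrow> Good q x y \<and> Small q x y"
proof -
  assume q: "q \<in> setI" and m: "movesR q x y"
  then have "q = [W,B] \<or> q = [W,B,W,B] \<or> q = W # alt W (2*2+1)" unfolding setI_def e1 by blast
  then show ?thesis
  proof (elim disjE)
    assume "q = W # alt W (2*2+1)" then show ?thesis using m fam2[of 2 x y] by simp
  qed (use m Good_Small_concrete in auto)
qed

lemma gF: "q \<in> setF \<Longrightarrow> movesR q x y \<Longrightarrow> Good q x y \<and> Small q x y"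
proof -
  assume q: "q \<in> setF" and m: "movesR q x y"
  then have "q = W # alt W (2*3+1)" unfolding setF_def e1 by blast
  then show ?thesis using m fam2[of 3 x y] by simp
qed

lemma gX: "q \<in> setX \<Longrightarrow> movesR q x y \<Longrightarrow> Good q x y \<and> Small q x y"
proof -
  assume q: "q \<in> setX" and m: "movesR q x y"
  then have "q = [B,B,W]" unfolding setX_def by simp
  then show ?thesis using m Good_Small_concrete by blast
qed




definition Inv :: "game \<Rightarrow> bool" where
  "Inv s \<longleftrightarrow> (\<forall>p\<in>#s. allowed p) \<and> cnt setA s + cnt setoA s \<le> 1 \<and>
     cnt C2 s + (cnt C1 s - cnt setX s) + cnt setoA s \<le> cnt setO s"

definition wt :: "part \<Rightarrow> nat" where "wt p = length p * length p + 1"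
definition mu :: "game \<Rightarrow> nat" where "mu s = sum_mset (image_mset wt s)"

definition condR :: "part \<Rightarrow> part list \<Rightarrow> bool" where
  "condR l r \<longleftrightarrow> sum_list (map wt r) < wt l \<and> (\<not> wk l \<or> (ind setO l = 0 \<and> ind setX l = 0 \<and>
      (\<forall>x\<in>set r. allowed x \<and> length x \<le> 4) \<and> sum_list (map (ind C1) r) \<le> ind C1 l))"

lemma indO_eq: "ind setO q = (if q = alt W (length q) \<and> odd (length q) \<and> length q \<ge> 5 \<and> length q \<noteq> 9 then 1 else 0)"
proof -
  have "q = alt W (length q) \<Longrightarrow> odd (length q) \<Longrightarrow> length q \<ge> 5 \<Longrightarrow> length q \<noteq> 9 \<Longrightarrow> in_up q setO"
  proof -
    assume a: "q = alt W (length q)" "odd (length q)" "length q \<ge> 5" "length q \<noteq> 9"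
    then obtain t where t: "length q = 2*t+1" using oddE by blast
    then have "q = o_odd t" "t \<ge> 2" "t \<noteq> 4" using a by (auto simp: o_odd_alt simp del: alt.simps)
    then show "in_up q setO" unfolding setO_def by (intro in_up_I[of "o_odd t"]) auto
  qed
  then show ?thesis using in_up_setO[of q] by (auto simp: ind_def)
qed

definition rule_ok :: "(part \<times> part list) list \<Rightarrow> bool" where
  "rule_ok rs \<longleftrightarrow> (\<forall>(l,r)\<in>set rs. condR l r)"

lemma neg_Repl: "neg_rule (Repl rs) = Repl (map (\<lambda>(l, r). (negp l, map negp r)) rs)" by simp

lemma ok_alpha: "rule_ok [(wd ''o'', []), (wd ''oo'', []), (wd ''ooo'', []), (wd ''ooxx'', []), (wd ''oxoxox'', [])]"
  "rule_ok (map (\<lambda>(l, r). (negp l, map negp r)) [(wd ''o'', []), (wd ''oo'', []), (wd ''ooo'', []), (wd ''ooxx'', []), (wd ''oxoxox'', [])])"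
  by (simp_all add: rule_ok_def condR_def wd_def negp_def wt_def wk_def same_part_def indO_eq ind_X_eq)

lemma ok_gamma: "rule_ok [(wd ''oxo'', [wd ''ox'']), (wd ''ooxox'', [wd ''ox'']),
                      (wd ''ooxoxoo'', [wd ''ox'']), (wd ''xxoxoxx'', [wd ''ox''])]"
  "rule_ok (map (\<lambda>(l, r). (negp l, map negp r)) [(wd ''oxo'', [wd ''ox'']), (wd ''ooxox'', [wd ''ox'']),
                      (wd ''ooxoxoo'', [wd ''ox'']), (wd ''xxoxoxx'', [wd ''ox''])])"
  by (simp_all add: rule_ok_def condR_def wd_def negp_def wt_def wk_def same_part_def indO_eq ind_X_eq ind_C1_eq)

lemma ok_delta: "rule_ok [(wd ''oxoxoxoxo'', [wd ''ooxo''])]"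
  "rule_ok (map (\<lambda>(l, r). (negp l, map negp r)) [(wd ''oxoxoxoxo'', [wd ''ooxo''])])"
  by (simp_all add: rule_ok_def condR_def wd_def negp_def wt_def wk_def same_part_def indO_eq ind_X_eq ind_C1_eq)

lemma ok_eps: "rule_ok [(wd ''ooxoxx'', [wd ''oxox'', wd ''ox'']), (wd ''oxoxoxoxoxox'', [wd ''oxox'', wd ''ox''])]"
  "rule_ok (map (\<lambda>(l, r). (negp l, map negp r)) [(wd ''ooxoxx'', [wd ''oxox'', wd ''ox'']), (wd ''oxoxoxoxoxox'', [wd ''oxox'', wd ''ox''])])"
  by (simp_all add: rule_ok_def condR_def wd_def negp_def wt_def wk_def same_part_def indO_eq ind_X_eq ind_C1_eq)

lemma ok_zeta: "rule_ok [(wd ''ooxoo'', [wd ''oox''])]"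
  "rule_ok (map (\<lambda>(l, r). (negp l, map negp r)) [(wd ''ooxoo'', [wd ''oox''])])"
  by (simp_all add: rule_ok_def condR_def wd_def negp_def wt_def wk_def same_part_def indO_eq ind_X_eq ind_C1_eq)

lemma ok_eta: "rule_ok [(wd ''ooxo'', [wd ''xxo'', wd ''ox''])]"
  "rule_ok (map (\<lambda>(l, r). (negp l, map negp r)) [(wd ''ooxo'', [wd ''xxo'', wd ''ox''])])"
  by (simp_all add: rule_ok_def condR_def wd_def negp_def wt_def wk_def same_part_def indO_eq ind_X_eq ind_C1_eq)

lemma asf_rules_ok: "\<rho> \<in> set asf_rules \<Longrightarrow> \<rho> = Cancel \<or> (\<exists>rs. \<rho> = Repl rs \<and> rule_ok rs)"
  unfolding asf_rules_def rule_alpha_def rule_gamma_def rule_delta_def rule_eps_def rule_zeta_def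
    rule_eta_def neg_Repl
  using ok_alpha ok_gamma ok_delta ok_eps ok_zeta ok_eta
  by (simp only: set_simps insert_iff empty_iff neg_rule.simps(2)) blast




lemma cnt_sum: "cnt A M = (\<Sum>q\<in>#M. ind A q)"
  by (induction M) auto

lemma cnt_mset: "cnt A (mset r) = sum_list (map (ind A) r)"
  by (induction r) auto

lemma cnt_mset_short: "(\<forall>x\<in>set r. length x \<le> 4) \<Longrightarrow>
   cnt setA (mset r) = 0 \<and> cnt setoA (mset r) = 0 \<and> cnt C2 (mset r) = 0"
  by (induction r) auto

lemma mu_remove: "p \<in># s \<Longrightarrow> mu s = mu (s - {#p#}) + wt p"
  by (metis add.commute insert_DiffM mu_def sum_mset.insert image_mset_add_mset)

lemma mu_plus: "mu (s + t) = mu s + mu t" by (simp add: mu_def)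
lemma mu_mset: "mu (mset r) = sum_list (map wt r)"
  by (induction r) (auto simp: mu_def)

lemma same_part_length: "same_part p q \<Longrightarrow> length p = length q"
  by (auto simp: same_part_def)

lemma repl_step:
  assumes "rule_ok rs" "rule_res (Repl rs) s s'"
  shows "mu s' < mu s \<and> (Inv s \<longrightarrow> Inv s')"
proof -
  from assms(2) obtain l r p where lr: "(l, r) \<in> set rs" and p: "p \<in># s" "same_part p l"
    and s': "s' = s - {#p#} + mset r" by auto
  have c: "condR l r" using assms(1) lr by (auto simp: rule_ok_def)
  have wl: "wt p = wt l" using same_part_length[OF p(2)] by (simp add: wt_def)
  have mu: "mu s' < mu s"
    using c mu_remove[OF p(1)] wl by (simp add: s' mu_plus mu_mset condR_def)
  have "Inv s \<Longrightarrow> Inv s'"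
  proof -
    assume I: "Inv s"
    then have "allowed p" using p by (auto simp: Inv_def)
    then have "wk l" using allowed_same[OF p(2)] allowed_wk by blast
    then have c2: "ind setO l = 0" "ind setX l = 0" "\<forall>x\<in>set r. allowed x \<and> length x \<le> 4"
      "sum_list (map (ind C1) r) \<le> ind C1 l" using c by (auto simp: condR_def)
    define s0 where "s0 = s - {#p#}"
    have cs: "cnt A s = cnt A s0 + ind A l" for A
      using cnt_remove[OF p(1)] ind_same[OF p(2)] by (simp add: s0_def)
    have cs': "cnt A s' = cnt A s0 + cnt A (mset r)" for A by (simp add: s' s0_def)
    from cnt_mset_short[of r] c2(3) have z: "cnt setA (mset r) = 0" "cnt setoA (mset r) = 0"
      "cnt C2 (mset r) = 0" by auto
    have c1: "cnt C1 (mset r) \<le> ind C1 l" using c2(4) by (simp add: cnt_mset)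
    have al: "\<forall>q\<in>#s'. allowed q" using I c2(3) by (auto simp: Inv_def s' dest: in_diffD)
    have "cnt setA s' + cnt setoA s' \<le> 1" using I cs[of setA] cs[of setoA] cs' z
      by (simp add: Inv_def)
    moreover have "cnt C2 s' + (cnt C1 s' - cnt setX s') + cnt setoA s' \<le> cnt setO s'"
    proof -
      have "cnt C2 s' \<le> cnt C2 s" "cnt setoA s' \<le> cnt setoA s" "cnt C1 s' \<le> cnt C1 s"
        "cnt setX s' \<ge> cnt setX s" "cnt setO s' \<ge> cnt setO s"
        using cs cs' z c1 c2(1,2) by (simp_all add: cs[of C2] cs[of setoA] cs[of C1] cs[of setX] cs[of setO])
      then show ?thesis using I unfolding Inv_def by linarith
    qed
    ultimately show "Inv s'" using al by (simp add: Inv_def)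
  qed
  then show ?thesis using mu by blast
qed

lemma negp_alt: "negp (alt s n) = alt (swap s) n"
  by (induction n arbitrary: s) (auto simp: negp_def)

lemma cancel_notO:
  assumes "allowed q" "same_part q (negp p)" "in_up p setO"
  shows False
proof -
  from in_up_setO[OF assms(3)] have p: "p = alt W (length p)" "odd (length p)" "length p \<ge> 5" by auto
  define n where "n = length p"
  have np: "negp p = alt B n" using p negp_alt[of W n] by (simp add: n_def)
  have "rev (alt B n) = alt B n" using p by (simp add: rev_alt_odd n_def)
  then have q: "q = alt B n" using assms(2) np by (auto simp: same_part_def)
  have "wk q" using assms(1) allowed_wk by blast
  moreover have "n > 0" "odd n" using p n_def by auto
  then have "hd q = B" "last q = B" using q hd_alt[of n B] last_alt[of n B] by auto
  moreover have "length q \<ge> 5" using q p n_def by simp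
  ultimately show False by (auto simp: wk_def same_part_def)
qed

lemma cancel_X:
  assumes "same_part q (negp p)" "in_up p setX"
  shows "in_up q C1"
proof -
  have "same_part p [B,B,W]" using assms(2) by (simp add: in_up_setX)
  then have "same_part (negp p) [W,W,B]" using same_part_negp by (fastforce simp: negp_def)
  then have "same_part q [W,W,B]" using assms(1) same_part_trans by blast
  then show ?thesis by (simp add: in_up_C1)
qed

lemma cancel_step:
  assumes "rule_res Cancel s s'"
  shows "mu s' < mu s \<and> (Inv s \<longrightarrow> Inv s')"
proof -
  from assms obtain p q where p: "p \<in># s" and q: "q \<in># s - {#p#}" and sp: "same_part q (negp p)"
    and s': "s' = s - {#p, q#}" by auto
  define s1 where "s1 = s - {#p#}"
  have s'1: "s' = s1 - {#q#}" by (simp add: s' s1_def add_mset_commute)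
  have mu: "mu s' < mu s" using mu_remove[OF p] mu_remove[of q s1] q
    by (simp add: s'1 s1_def wt_def)
  have cs: "cnt A s = cnt A s' + ind A p + ind A q" for A
    using cnt_remove[OF p, of A] cnt_remove[of q s1 A] q by (simp add: s'1 s1_def)
  have "Inv s \<Longrightarrow> Inv s'"
  proof -
    assume I: "Inv s"
    have ap: "allowed p" and aq: "allowed q" using I p q by (auto simp: Inv_def dest: in_diffD)
    have sp': "same_part p (negp q)" using sp by (rule same_part_negp_sym)
    have o: "ind setO p = 0" "ind setO q = 0"
      using cancel_notO[OF aq sp] cancel_notO[OF ap sp'] by (auto simp: ind_def)
    have x: "ind setX p \<le> ind C1 q" "ind setX q \<le> ind C1 p"
      using cancel_X[OF sp] cancel_X[OF sp'] by (auto simp: ind_def)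
    have al: "\<forall>r\<in>#s'. allowed r" using I by (auto simp: Inv_def s' dest: in_diffD)
    have "cnt setA s' + cnt setoA s' \<le> 1" using I cs[of setA] cs[of setoA] by (simp add: Inv_def)
    moreover have "cnt C2 s' + (cnt C1 s' - cnt setX s') + cnt setoA s' \<le> cnt setO s'"
      using I cs[of C2] cs[of C1] cs[of setX] cs[of setoA] cs[of setO] o x unfolding Inv_def by linarith
    ultimately show "Inv s'" using al by (simp add: Inv_def)
  qed
  then show ?thesis using mu by blast
qed

lemma rule_step:
  assumes "\<rho> \<in> set asf_rules" "rule_res \<rho> s s'"
  shows "mu s' < mu s \<and> (Inv s \<longrightarrow> Inv s')"
  using asf_rules_ok[OF assms(1)] assms(2) repl_step cancel_step by blast

lemma asf_step_prop: "asf_step s s' \<Longrightarrow> mu s' < mu s \<and> (Inv s \<longrightarrow> Inv s')"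
  unfolding asf_step_def using rule_step nth_mem by blast

lemma asf_star_Inv: "asf_step\<^sup>*\<^sup>* s s' \<Longrightarrow> Inv s \<Longrightarrow> Inv s'"
  by (induction rule: rtranclp_induct) (auto dest: asf_step_prop)

lemma ex_nf: "\<exists>s'. asf_step\<^sup>*\<^sup>* s s' \<and> standard_form s'"
proof (induction "mu s" arbitrary: s rule: less_induct)
  case less
  show ?case
  proof (cases "standard_form s")
    case True then show ?thesis by blast
  next
    case False
    then obtain \<rho> where "\<rho> \<in> set asf_rules" "applicable \<rho> s" by (auto simp: standard_form_def)
    then obtain i0 where i0: "i0 < length asf_rules" "applicable (asf_rules ! i0) s"
      by (metis in_set_conv_nth)
    define P where "P = (\<lambda>i. i < length asf_rules \<and> applicable (asf_rules ! i) s)"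
    define i where "i = (LEAST i. P i)"
    have Pi: "P i" unfolding i_def using i0 by (intro LeastI[of P i0]) (simp add: P_def)
    have lt: "\<forall>j<i. \<not> applicable (asf_rules ! j) s"
    proof (intro allI impI)
      fix j assume "j < i"
      then have "\<not> P j" unfolding i_def by (rule not_less_Least)
      then show "\<not> applicable (asf_rules ! j) s" using \<open>j < i\<close> Pi by (auto simp: P_def)
    qed
    from Pi obtain s1 where s1: "rule_res (asf_rules ! i) s s1" by (auto simp: P_def applicable_def)
    have st: "asf_step s s1" unfolding asf_step_def using Pi s1 lt by (auto simp: P_def)
    then have "mu s1 < mu s" using asf_step_prop by blast
    from less[OF this] obtain s' where "asf_step\<^sup>*\<^sup>* s1 s'" "standard_form s'" by blast
    then show ?thesis using st by (meson converse_rtranclp_into_rtranclp)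
  qed
qed




lemma std_noR: "standard_form s \<Longrightarrow> Repl rs \<in> set asf_rules \<Longrightarrow> (l, r) \<in> set rs \<Longrightarrow> p \<in># s
   \<Longrightarrow> same_part p l \<Longrightarrow> False"
  unfolding standard_form_def applicable_def by fastforce

lemma forbid_0: "standard_form s \<Longrightarrow> p \<in># s \<Longrightarrow> same_part p [W] \<Longrightarrow> False"
proof -
  assume a: "standard_form s" "p \<in># s" "same_part p [W]"
  obtain rs where rs: "rule_alpha = Repl rs" "Repl rs \<in> set asf_rules"
    by (simp add: asf_rules_def rule_alpha_def)
  have "(wd ''o'', []) \<in> set rs" using rs(1) by (auto simp: rule_alpha_def)
  moreover have "wd ''o'' = [W]" by (simp add: wd_def)
  ultimately show False using std_noR[OF a(1) rs(2) _ a(2)] a(3) by metis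
qed

lemma forbid_1: "standard_form s \<Longrightarrow> p \<in># s \<Longrightarrow> same_part p [W,W] \<Longrightarrow> False"
proof -
  assume a: "standard_form s" "p \<in># s" "same_part p [W,W]"
  obtain rs where rs: "rule_alpha = Repl rs" "Repl rs \<in> set asf_rules"
    by (simp add: asf_rules_def rule_alpha_def)
  have "(wd ''oo'', []) \<in> set rs" using rs(1) by (auto simp: rule_alpha_def)
  moreover have "wd ''oo'' = [W,W]" by (simp add: wd_def)
  ultimately show False using std_noR[OF a(1) rs(2) _ a(2)] a(3) by metis
qed

lemma forbid_2: "standard_form s \<Longrightarrow> p \<in># s \<Longrightarrow> same_part p [W,W,W] \<Longrightarrow> False"
proof -
  assume a: "standard_form s" "p \<in># s" "same_part p [W,W,W]"
  obtain rs where rs: "rule_alpha = Repl rs" "Repl rs \<in> set asf_rules"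
    by (simp add: asf_rules_def rule_alpha_def)
  have "(wd ''ooo'', []) \<in> set rs" using rs(1) by (auto simp: rule_alpha_def)
  moreover have "wd ''ooo'' = [W,W,W]" by (simp add: wd_def)
  ultimately show False using std_noR[OF a(1) rs(2) _ a(2)] a(3) by metis
qed

lemma forbid_3: "standard_form s \<Longrightarrow> p \<in># s \<Longrightarrow> same_part p [W,B,W,B,W,B] \<Longrightarrow> False"
proof -
  assume a: "standard_form s" "p \<in># s" "same_part p [W,B,W,B,W,B]"
  obtain rs where rs: "rule_alpha = Repl rs" "Repl rs \<in> set asf_rules"
    by (simp add: asf_rules_def rule_alpha_def)
  have "(wd ''oxoxox'', []) \<in> set rs" using rs(1) by (auto simp: rule_alpha_def)
  moreover have "wd ''oxoxox'' = [W,B,W,B,W,B]" by (simp add: wd_def)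
  ultimately show False using std_noR[OF a(1) rs(2) _ a(2)] a(3) by metis
qed

lemma forbid_4: "standard_form s \<Longrightarrow> p \<in># s \<Longrightarrow> same_part p [B] \<Longrightarrow> False"
proof -
  assume a: "standard_form s" "p \<in># s" "same_part p [B]"
  obtain rs where rs: "neg_rule rule_alpha = Repl rs" "Repl rs \<in> set asf_rules"
    by (simp add: asf_rules_def rule_alpha_def)
  have "(negp (wd ''o''), map negp []) \<in> set rs" using rs(1) by (auto simp: rule_alpha_def)
  moreover have "negp (wd ''o'') = [B]" by (simp add: wd_def negp_def)
  ultimately show False using std_noR[OF a(1) rs(2) _ a(2)] a(3) by metis
qed

lemma forbid_5: "standard_form s \<Longrightarrow> p \<in># s \<Longrightarrow> same_part p [W,B,W] \<Longrightarrow> False"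
proof -
  assume a: "standard_form s" "p \<in># s" "same_part p [W,B,W]"
  obtain rs where rs: "rule_gamma = Repl rs" "Repl rs \<in> set asf_rules"
    by (simp add: asf_rules_def rule_gamma_def)
  have "(wd ''oxo'', [wd ''ox'']) \<in> set rs" using rs(1) by (auto simp: rule_gamma_def)
  moreover have "wd ''oxo'' = [W,B,W]" by (simp add: wd_def)
  ultimately show False using std_noR[OF a(1) rs(2) _ a(2)] a(3) by metis
qed

lemma forbid_6: "standard_form s \<Longrightarrow> p \<in># s \<Longrightarrow> same_part p [W,W,B,W,B] \<Longrightarrow> False"
proof -
  assume a: "standard_form s" "p \<in># s" "same_part p [W,W,B,W,B]"
  obtain rs where rs: "rule_gamma = Repl rs" "Repl rs \<in> set asf_rules"
    by (simp add: asf_rules_def rule_gamma_def)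
  have "(wd ''ooxox'', [wd ''ox'']) \<in> set rs" using rs(1) by (auto simp: rule_gamma_def)
  moreover have "wd ''ooxox'' = [W,W,B,W,B]" by (simp add: wd_def)
  ultimately show False using std_noR[OF a(1) rs(2) _ a(2)] a(3) by metis
qed

lemma forbid_7: "standard_form s \<Longrightarrow> p \<in># s \<Longrightarrow> same_part p [W,W,B,W,B,W,W] \<Longrightarrow> False"
proof -
  assume a: "standard_form s" "p \<in># s" "same_part p [W,W,B,W,B,W,W]"
  obtain rs where rs: "rule_gamma = Repl rs" "Repl rs \<in> set asf_rules"
    by (simp add: asf_rules_def rule_gamma_def)
  have "(wd ''ooxoxoo'', [wd ''ox'']) \<in> set rs" using rs(1) by (auto simp: rule_gamma_def)
  moreover have "wd ''ooxoxoo'' = [W,W,B,W,B,W,W]" by (simp add: wd_def)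
  ultimately show False using std_noR[OF a(1) rs(2) _ a(2)] a(3) by metis
qed

lemma forbid_8: "standard_form s \<Longrightarrow> p \<in># s \<Longrightarrow> same_part p [W,B,W,B,W,B,W,B,W] \<Longrightarrow> False"
proof -
  assume a: "standard_form s" "p \<in># s" "same_part p [W,B,W,B,W,B,W,B,W]"
  obtain rs where rs: "rule_delta = Repl rs" "Repl rs \<in> set asf_rules"
    by (simp add: asf_rules_def rule_delta_def)
  have "(wd ''oxoxoxoxo'', [wd ''ooxo'']) \<in> set rs" using rs(1) by (auto simp: rule_delta_def)
  moreover have "wd ''oxoxoxoxo'' = [W,B,W,B,W,B,W,B,W]" by (simp add: wd_def)
  ultimately show False using std_noR[OF a(1) rs(2) _ a(2)] a(3) by metis
qed

lemma forbid_9: "standard_form s \<Longrightarrow> p \<in># s \<Longrightarrow> same_part p [W,B,W,B,W,B,W,B,W,B,W,B] \<Longrightarrow> False"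
proof -
  assume a: "standard_form s" "p \<in># s" "same_part p [W,B,W,B,W,B,W,B,W,B,W,B]"
  obtain rs where rs: "rule_eps = Repl rs" "Repl rs \<in> set asf_rules"
    by (simp add: asf_rules_def rule_eps_def)
  have "(wd ''oxoxoxoxoxox'', [wd ''oxox'', wd ''ox'']) \<in> set rs" using rs(1) by (auto simp: rule_eps_def)
  moreover have "wd ''oxoxoxoxoxox'' = [W,B,W,B,W,B,W,B,W,B,W,B]" by (simp add: wd_def)
  ultimately show False using std_noR[OF a(1) rs(2) _ a(2)] a(3) by metis
qed

lemma forbid_10: "standard_form s \<Longrightarrow> p \<in># s \<Longrightarrow> same_part p [W,W,B,W,W] \<Longrightarrow> False"
proof -
  assume a: "standard_form s" "p \<in># s" "same_part p [W,W,B,W,W]"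
  obtain rs where rs: "rule_zeta = Repl rs" "Repl rs \<in> set asf_rules"
    by (simp add: asf_rules_def rule_zeta_def)
  have "(wd ''ooxoo'', [wd ''oox'']) \<in> set rs" using rs(1) by (auto simp: rule_zeta_def)
  moreover have "wd ''ooxoo'' = [W,W,B,W,W]" by (simp add: wd_def)
  ultimately show False using std_noR[OF a(1) rs(2) _ a(2)] a(3) by metis
qed

lemma forbid_11: "standard_form s \<Longrightarrow> p \<in># s \<Longrightarrow> same_part p [W,W,B,W] \<Longrightarrow> False"
proof -
  assume a: "standard_form s" "p \<in># s" "same_part p [W,W,B,W]"
  obtain rs where rs: "rule_eta = Repl rs" "Repl rs \<in> set asf_rules"
    by (simp add: asf_rules_def rule_eta_def)
  have "(wd ''ooxo'', [wd ''xxo'', wd ''ox'']) \<in> set rs" using rs(1) by (auto simp: rule_eta_def)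
  moreover have "wd ''ooxo'' = [W,W,B,W]" by (simp add: wd_def)
  ultimately show False using std_noR[OF a(1) rs(2) _ a(2)] a(3) by metis
qed




lemma K_O: "t \<ge> 2 \<Longrightarrow> t \<noteq> 4 \<Longrightarrow> alt W (2*t+1) \<in> setK"
  unfolding setK_def setO_def o_odd_alt by blast
lemma K_A: "m \<ge> 4 \<Longrightarrow> m \<noteq> 6 \<Longrightarrow> alt W (2*m) \<in> setK"
  unfolding setK_def setA_def a_part_alt by blast
lemma K_I: "[W,B] \<in> setK" "[W,B,W,B] \<in> setK" "W # alt W (2*2+1) \<in> setK"
  "W # alt W (2*3+1) \<in> setK" "[B,B,W] \<in> setK" "[W,W,B] \<in> setK"
proof -
  have "a_part 1 \<in> setK" "a_part 2 \<in> setK" "oo_even 3 \<in> setK" "oo_even 4 \<in> setK"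
    unfolding setK_def setI_def setF_def by blast+
  then show "[W,B] \<in> setK" "[W,B,W,B] \<in> setK" "W # alt W (2*2+1) \<in> setK"
    "W # alt W (2*3+1) \<in> setK" unfolding e1 by blast+
  show "[B,B,W] \<in> setK" "[W,W,B] \<in> setK" unfolding setK_def setX_def setoOo_def by auto
qed
lemma K_oO: "t \<ge> 4 \<Longrightarrow> W # alt W (2*t+1) \<in> setK"
proof -
  assume t: "t \<ge> 4"
  have e: "oo_even (t+1) = W # alt W (2*t+1)" by (simp add: oo_even_alt del: alt.simps)
  have "oo_even (t+1) \<in> setoO" unfolding setoO_def using t by (auto intro!: exI[of _ "t+1"])
  then show ?thesis using e unfolding setK_def by auto
qed
lemma K_oA: "t \<ge> 3 \<Longrightarrow> W # alt W (2*t) \<in> setK"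
  unfolding setK_def setoA_def oo_odd_alt by blast
lemma K_oOo: "t \<ge> 3 \<Longrightarrow> W # alt W (2*t+1) @ [W] \<in> setK"
proof -
  assume t: "t \<ge> 3"
  have e: "oo_odd_oo (t+1) = W # alt W (2*t+1) @ [W]" by (simp add: oo_odd_oo_alt del: alt.simps)
  have "oo_odd_oo (t+1) \<in> setoOo" unfolding setoOo_def using t by (auto intro!: exI[of _ "t+1"])
  then show ?thesis using e unfolding setK_def by auto
qed

lemma classify:
  assumes std: "standard_form s" and p: "p \<in># s" and al: "allowed p"
  shows "in_up p setK"
  using al unfolding allowed_def
proof (elim disjE exE conjE)
  assume "same_part p [B]" then show ?thesis using forbid_4 std p by blast
next
  assume "same_part p [B,B,W]" then show ?thesis using K_I(5) in_up_I by blast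
next
  fix n assume n: "1 \<le> n" and sp: "same_part p (alt W n)"
  show ?thesis
  proof (cases "even n")
    case True
    then obtain m where m: "n = 2*m" by blast
    consider "m = 1" | "m = 2" | "m = 3" | "m = 6" | "m \<ge> 4 \<and> m \<noteq> 6" using n m by linarith
    then show ?thesis
    proof cases
      case 1 then have "same_part p [W,B]" using sp m by simp
      with K_I(1) show ?thesis by (rule in_up_I)
    next
      case 2 then have "same_part p [W,B,W,B]" using sp m by simp
      with K_I(2) show ?thesis by (rule in_up_I)
    next
      case 3 then show ?thesis using forbid_3[OF std p] sp m by simp
    next
      case 4 then show ?thesis using forbid_9[OF std p] sp m by simp
    next
      case 5 then show ?thesis using K_A sp m in_up_I by blast
    qed
  next
    case False
    then obtain t where t: "n = 2*t+1" using oddE by blast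
    consider "t = 0" | "t = 1" | "t = 4" | "t \<ge> 2 \<and> t \<noteq> 4" by linarith
    then show ?thesis
    proof cases
      case 1 then show ?thesis using forbid_0[OF std p] sp t by simp
    next
      case 2 then show ?thesis using forbid_5[OF std p] sp t by simp
    next
      case 3 then show ?thesis using forbid_8[OF std p] sp t by simp
    next
      case 4 then show ?thesis using K_O sp t in_up_I by blast
    qed
  qed
next
  fix n assume sp: "same_part p (W # alt W n)"
  show ?thesis
  proof (cases "even n")
    case True
    then obtain t where t: "n = 2*t" by blast
    consider "t = 0" | "t = 1" | "t = 2" | "t \<ge> 3" by linarith
    then show ?thesis
    proof cases
      case 1 then show ?thesis using forbid_0[OF std p] sp t by simp
    next
      case 2 then have "same_part p [W,W,B]" using sp t by simp
      with K_I(6) show ?thesis by (rule in_up_I)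
    next
      case 3 then show ?thesis using forbid_6[OF std p] sp t by simp
    next
      case 4 then show ?thesis using K_oA sp t in_up_I by blast
    qed
  next
    case False
    then obtain t where t: "n = 2*t+1" using oddE by blast
    consider "t = 0" | "t = 1" | "t = 2" | "t = 3" | "t \<ge> 4" by linarith
    then show ?thesis
    proof cases
      case 1 then show ?thesis using forbid_1[OF std p] sp t by simp
    next
      case 2 then show ?thesis using forbid_11[OF std p] sp t by simp
    next
      case 3 then show ?thesis using K_I(3) sp t in_up_I by blast
    next
      case 4 then show ?thesis using K_I(4) sp t in_up_I by blast
    next
      case 5 then show ?thesis using K_oO sp t in_up_I by blast
    qed
  qed
next
  fix t assume sp: "same_part p (W # alt W (2*t+1) @ [W])"
  consider "t = 0" | "t = 1" | "t = 2" | "t \<ge> 3" by linarith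
  then show ?thesis
  proof cases
    case 1 then show ?thesis using forbid_2[OF std p] sp by simp
  next
    case 2 then show ?thesis using forbid_10[OF std p] sp by simp
  next
    case 3 then show ?thesis using forbid_7[OF std p] sp by simp
  next
    case 4 then show ?thesis using K_oOo sp in_up_I by blast
  qed
qed




lemma cnt_cong: "(\<forall>q\<in>#s. ind A q = ind B1 q + ind B2 q) \<Longrightarrow> cnt A s = cnt B1 s + cnt B2 s"
  by (induction s) auto

lemma cnt_pos: "cnt A s > 0 \<Longrightarrow> \<exists>p\<in>#s. in_up p A"
  by (induction s) (auto simp: ind_def split: if_splits)

lemma cnt_zero: "cnt A s = 0 \<Longrightarrow> p \<in># s \<Longrightarrow> \<not> in_up p A"
  using cnt_remove[of p s A] by (auto simp: ind_def)

lemma ind_oOo: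
  assumes "\<not> same_part q [W,W,B,W,W]"
  shows "ind setoOo q = ind C1 q + ind C2 q"
proof -
  have a: "in_up q setoOo \<longleftrightarrow> same_part q [W,W,B] \<or> in_up q C2"
    by (auto simp: in_up_def setoOo_def C2_def)
  have b: "same_part q [W,W,B] \<Longrightarrow> \<not> in_up q C2"
    using in_up_C2[of q] same_part_length[of q "[W,W,B]"] by auto
  show ?thesis using a b assms by (auto simp: ind_def in_up_C1)
qed

lemma std_oOo: "standard_form s \<Longrightarrow> cnt setoOo s = cnt C1 s + cnt C2 s"
  by (intro cnt_cong) (metis forbid_10 ind_oOo)

lemma std_X_C1:
  assumes std: "standard_form s"
  shows "cnt setX s = 0 \<or> cnt C1 s = 0"
proof (rule ccontr)
  assume "\<not> ?thesis"
  then obtain p q where p: "p \<in># s" "in_up p setX" and q: "q \<in># s" "in_up q C1"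
    using cnt_pos by (metis neq0_conv)
  have sp: "same_part p [B,B,W]" using p by (simp add: in_up_setX)
  have sq: "same_part q [W,W,B]" using q forbid_10[OF std q(1)] by (auto simp: in_up_C1)
  have "q \<noteq> p" using sp sq by (auto simp: same_part_def)
  then have q': "q \<in># s - {#p#}" using q(1) by (simp add: in_diff_count)
  have "same_part (negp p) (negp [B,B,W])" using sp by (rule same_part_negp)
  then have "same_part (negp p) [W,W,B]" by (simp add: negp_def)
  then have "same_part q (negp p)" using sq by (meson same_part_sym same_part_trans)
  then have "applicable Cancel s" using p(1) q' unfolding applicable_def by fastforce
  moreover have "Cancel \<in> set asf_rules" by (simp add: asf_rules_def)
  ultimately show False using std by (auto simp: standard_form_def)
qed

lemma std_S0:
  assumes std: "standard_form s" and I: "Inv s"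
  shows "s \<in> S0"
proof -
  have K: "\<forall>p\<in>#s. in_up p setK" using I classify[OF std] by (auto simp: Inv_def)
  have d: "dom_K s" using K std by (simp add: dom_K_def)
  have o: "cnt setoOo s = cnt C1 s + cnt C2 s" by (rule std_oOo[OF std])
  have xc: "cnt setX s = 0 \<or> cnt C1 s = 0" by (rule std_X_C1[OF std])
  have i1: "cnt setA s + cnt setoA s \<le> 1" and
    i2: "cnt C2 s + (cnt C1 s - cnt setX s) + cnt setoA s \<le> cnt setO s" using I by (auto simp: Inv_def)
  have i3: "cnt C2 s + cnt C1 s + cnt setoA s \<le> cnt setO s" using i2 xc by auto
  show ?thesis unfolding S0_def using d i1 i3 o by auto
qed

lemma Good_cong: "same_part p q \<Longrightarrow> Good q x y \<Longrightarrow> Good p x y"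
  by (simp add: Good_def ind_same)
lemma Small_cong: "same_part p q \<Longrightarrow> Small q x y \<Longrightarrow> Small p x y"
  by (simp add: Small_def ind_same)

lemma goodQ:
  assumes "q \<in> setK" "q \<notin> setA" "q \<notin> setoA" "movesR q x y"
  shows "Good q x y \<and> (q \<notin> setO \<and> q \<notin> setoO \<and> q \<notin> setoOo \<longrightarrow> Small q x y)"
  using assms gO goO goOo gI gF gX unfolding setK_def by blast

lemma goodK:
  assumes "in_up p setK" "\<not> in_up p setA" "\<not> in_up p setoA" "movesR p x y"
  shows "Good p x y \<and> (\<not> in_up p setO \<and> \<not> in_up p setoO \<and> \<not> in_up p setoOo \<longrightarrow> Small p x y)"
proof -
  from assms(1) obtain q where q: "q \<in> setK" "same_part p q" by (auto simp: in_up_def)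
  have nq: "q \<notin> setA" "q \<notin> setoA" using assms(2,3) q in_up_I by blast+
  have tr: "q \<in> setO \<Longrightarrow> in_up p setO" "q \<in> setoO \<Longrightarrow> in_up p setoO" "q \<in> setoOo \<Longrightarrow> in_up p setoOo"
    using q in_up_I by blast+
  from q(2) consider "p = q" | "p = rev q" by (auto simp: same_part_def)
  then show ?thesis
  proof cases
    case 1 then show ?thesis using goodQ[OF q(1) nq] assms(4) tr by blast
  next
    case 2
    then have m: "movesR q (rev y) (rev x)" using assms(4) movesR_rev by blast
    from goodQ[OF q(1) nq m] have G: "Good q x y" "q \<notin> setO \<and> q \<notin> setoO \<and> q \<notin> setoOo \<longrightarrow> Small q x y"
      using Good_rev[of q "rev y" "rev x"] Good_sym Small_rev[of q "rev y" "rev x"] Small_sym by auto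
    then show ?thesis using Good_cong[OF q(2)] Small_cong[OF q(2)] tr by blast
  qed
qed

lemma K_allowed_q: "q \<in> setK \<Longrightarrow> allowed q"
proof -
  assume q: "q \<in> setK"
  have A: "q \<in> setO \<Longrightarrow> allowed q"
  proof -
    assume "q \<in> setO"
    then obtain t where "q = alt W (2*t+1)" by (auto simp: setO_def o_odd_alt simp del: alt.simps)
    then show ?thesis using allowed_alt[of "2*t+1" q] by simp
  qed
  have B: "q \<in> setoO \<Longrightarrow> allowed q"
  proof -
    assume "q \<in> setoO"
    then obtain t where "q = W # alt W (2*t-1)" by (auto simp: setoO_def oo_even_alt simp del: alt.simps)
    then show ?thesis using allowed_Walt[of q "2*t-1"] by simp
  qed
  have C: "q \<in> setoOo \<Longrightarrow> allowed q"
  proof -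
    assume "q \<in> setoOo"
    then consider "q = [W,W,B]" | t where "t \<ge> 4" "q = oo_odd_oo t" by (auto simp: setoOo_def)
    then show ?thesis
    proof cases
      case 2
      moreover have "2*t-1 = 2*(t-1)+1" using 2 by simp
      ultimately have "q = W # alt W (2*(t-1)+1) @ [W]" by (simp add: oo_odd_oo_alt del: alt.simps)
      then show ?thesis using allowed_WaltW[of q "t-1"] by simp
    qed simp
  qed
  have D: "q \<in> setI \<Longrightarrow> allowed q"
    unfolding setI_def e1 using allowed_Walt[of "W # alt W (2*2+1)" "2*2+1"] by auto
  have E: "q \<in> setF \<Longrightarrow> allowed q"
    unfolding setF_def e1 using allowed_Walt[of "W # alt W (2*3+1)" "2*3+1"] by auto
  have F: "q \<in> setX \<Longrightarrow> allowed q" by (simp add: setX_def)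
  have G: "q \<in> setA \<Longrightarrow> allowed q"
  proof -
    assume "q \<in> setA"
    then obtain t where "q = alt W (2*t)" "t \<ge> 4" by (auto simp: setA_def a_part_alt simp del: alt.simps)
    then show ?thesis using allowed_alt[of "2*t" q] by simp
  qed
  have H: "q \<in> setoA \<Longrightarrow> allowed q"
  proof -
    assume "q \<in> setoA"
    then obtain t where "q = W # alt W (2*t)" by (auto simp: setoA_def oo_odd_alt simp del: alt.simps)
    then show ?thesis using allowed_Walt[of q "2*t"] by simp
  qed
  show ?thesis using q A B C D E F G H unfolding setK_def by blast
qed

lemma K_allowed: "in_up p setK \<Longrightarrow> allowed p"
  using K_allowed_q allowed_same by (auto simp: in_up_def)




lemma right_move_unpack:
  "right_move g h \<Longrightarrow> \<exists>p\<in>#g. \<exists>x y. movesR p x y \<and> h = g - {#p#} + filter_mset (\<lambda>q. q \<noteq> []) {#x, y#}"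
  unfolding right_move_def movesR_def by blast

lemma cnt_filter: "\<not> in_up [] A \<Longrightarrow> cnt A (filter_mset (\<lambda>q. q \<noteq> []) {#x, y#}) = ind A x + ind A y"
  by (cases "x = []"; cases "y = []") (auto simp: ind_def)

lemma init_Inv:
  assumes g: "g \<in> S1 \<union> S2" and rm: "right_move g h"
  shows "Inv h"
proof -
  from right_move_unpack[OF rm] obtain p x y where p: "p \<in># g" and m: "movesR p x y"
    and h: "h = g - {#p#} + filter_mset (\<lambda>q. q \<noteq> []) {#x, y#}" by blast
  define g0 where "g0 = g - {#p#}"
  have dk: "dom_K g" and A0: "cnt setA g = 0" and oA0: "cnt setoA g = 0" using g by (auto simp: S1_def S2_def)
  have std: "standard_form g" and K: "\<forall>q\<in>#g. in_up q setK" using dk by (auto simp: dom_K_def)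
  have cg: "cnt A g = cnt A g0 + ind A p" for A using cnt_remove[OF p] by (simp add: g0_def)
  have ch: "cnt A h = cnt A g0 + ind A x + ind A y" if "\<not> in_up [] A" for A
    using cnt_filter[OF that] by (simp add: h g0_def)
  note chs = ch[OF not_in_up_Nil(1)] ch[OF not_in_up_Nil(2)] ch[OF not_in_up_Nil(3)]
    ch[OF not_in_up_Nil(4)] ch[OF not_in_up_Nil(5)] ch[OF not_in_up_Nil(6)]
  have pK: "in_up p setK" using K p by blast
  have pA: "\<not> in_up p setA" "\<not> in_up p setoA" using cnt_zero[OF A0 p] cnt_zero[OF oA0 p] by auto
  from goodK[OF pK pA m] have G: "Good p x y"
    and Sm: "\<not> in_up p setO \<and> \<not> in_up p setoO \<and> \<not> in_up p setoOo \<longrightarrow> Small p x y" by auto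
  have al: "\<forall>q\<in>#h. allowed q"
  proof
    fix q assume "q \<in># h"
    then have "q \<in># g0 \<or> (q \<noteq> [] \<and> (q = x \<or> q = y))" by (auto simp: h g0_def split: if_splits)
    then show "allowed q"
    proof
      assume "q \<in># g0" then have "q \<in># g" by (auto simp: g0_def dest: in_diffD)
      then show ?thesis using K K_allowed by blast
    qed (use G in \<open>auto simp: Good_def\<close>)
  qed
  have Y: "Yq x + Yq y \<le> 1" and T: "Tq x + Tq y + ind setO p \<le> 1 + ind C2 p + ind C1 p"
    using G by (auto simp: Good_def)
  have o: "cnt setoOo g = cnt C1 g + cnt C2 g" by (rule std_oOo[OF std])
  have i1: "cnt setA h + cnt setoA h \<le> 1"
    using Y chs cg[of setA] cg[of setoA] A0 oA0 by (simp add: Yq_def)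
  have sub: "cnt C1 h - cnt setX h \<le> cnt C1 h" by simp
  have i2: "cnt C2 h + (cnt C1 h - cnt setX h) + cnt setoA h \<le> cnt setO h"
    using g
  proof
    assume "g \<in> S1"
    then have s1: "cnt setoOo g + 1 \<le> cnt setO g" by (auto simp: S1_def)
    show ?thesis using s1 o sub T chs cg[of setO] cg[of C1] cg[of C2] cg[of setoA] oA0
      unfolding Tq_def by linarith
  next
    assume "g \<in> S2"
    then have s2: "cnt setO g = 0" "cnt setoO g = 0" "cnt setoOo g = 0" "cnt setX g \<ge> 1"
      by (auto simp: S2_def)
    have "\<not> in_up p setO" "\<not> in_up p setoO" "\<not> in_up p setoOo"
      using cnt_zero[OF s2(1) p] cnt_zero[OF s2(2) p] cnt_zero[OF s2(3) p] by auto
    then have "Small p x y" using Sm by blast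
    then have sm: "ind C2 x + ind C2 y = 0" "ind setoA x + ind setoA y = 0"
      "ind C1 x + ind C1 y + ind setX p \<le> 1" by (auto simp: Small_def)
    have "cnt C1 h \<le> cnt setX h"
      using sm s2 o chs cg[of C1] cg[of setX] by linarith
    then have "cnt C1 h - cnt setX h = 0" by simp
    moreover have "cnt C2 h = 0" "cnt setoA h = 0"
      using sm s2 o chs cg[of C2] cg[of setoA] oA0 by linarith+
    ultimately show ?thesis by simp
  qed
  show ?thesis using al i1 i2 by (simp add: Inv_def)
qed

theorem theorem3:
  assumes "g \<in> S1 \<union> S2"
    and "right_move g h"
  shows "(\<exists>g'. ASF h g') \<and> (\<forall>g'. ASF h g' \<longrightarrow> g' \<in> S0)"
proof
  show "\<exists>g'. ASF h g'" using ex_nf[of h] by (auto simp: ASF_def)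
next
  have I: "Inv h" by (rule init_Inv[OF assms])
  show "\<forall>g'. ASF h g' \<longrightarrow> g' \<in> S0"
  proof (intro allI impI)
    fix g' assume "ASF h g'"
    then have "asf_step\<^sup>*\<^sup>* h g'" "standard_form g'" by (auto simp: ASF_def)
    then show "g' \<in> S0" using asf_star_Inv[OF _ I] std_S0 by blast
  qed
qed


end
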